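(* Let $c\ge 5$ and $g\ge 2$. The free-nilpotent complex Lie algebra $N(c,g)$ does not admit a periodic prederivation.
   Context: $N(c,g)$ denotes the free-nilpotent complex Lie algebra of nilpotency class $c$ on $g$ generators. A linear map $P:\mathfrak{g}\to\mathfrak{g}$ is a prederivation if $P([x,[y,z]])=[P(x),[y,z]]+[x,[P(y),z]]+[x,[y,P(z)]]$ for all $x,y,z\in\mathfrak{g}$; it is periodic if $P^m=\mathrm{id}$ for some integer $m\ge 1$. *)

theory Defs
  imports Complex_Main "HOL-Library.Function_Algebras"
begin

text \<open>
  Let A be the free associative complex algebra on the letters 0,...,g-1
  (non-commutative polynomials; an element is a coefficient function on words,
  i.e. on lists of letters).  Its quotient by the ideal spanned by words of
  length > c is the truncated algebra; its product is concatenation of words,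
  discarding words of length > c.  With the commutator bracket it is a Lie
  algebra, and N(c,g) is (isomorphic to) the Lie subalgebra generated by the
  g letters (free Lie algebra modulo its terms of degree > c).
\<close>

type_synonym tword = "nat list \<Rightarrow> complex"

definition tmul :: "nat \<Rightarrow> tword \<Rightarrow> tword \<Rightarrow> tword" where
  "tmul c f h = (\<lambda>w. if length w \<le> c
      then (\<Sum>i\<le>length w. f (take i w) * h (drop i w)) else 0)"

definition lie_br :: "nat \<Rightarrow> tword \<Rightarrow> tword \<Rightarrow> tword" where
  "lie_br c f h = tmul c f h - tmul c h f"

definition lie_gen :: "nat \<Rightarrow> tword" where
  "lie_gen i = (\<lambda>w. if w = [i] then 1 else 0)"

inductive_set freeNil :: "nat \<Rightarrow> nat \<Rightarrow> tword set" for c g where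
  zero: "0 \<in> freeNil c g"
| gen: "i < g \<Longrightarrow> lie_gen i \<in> freeNil c g"
| add: "x \<in> freeNil c g \<Longrightarrow> y \<in> freeNil c g \<Longrightarrow> x + y \<in> freeNil c g"
| smult: "x \<in> freeNil c g \<Longrightarrow> (\<lambda>w. a * x w) \<in> freeNil c g"
| br: "x \<in> freeNil c g \<Longrightarrow> y \<in> freeNil c g \<Longrightarrow> lie_br c x y \<in> freeNil c g"

definition is_linear_endo :: "nat \<Rightarrow> nat \<Rightarrow> (tword \<Rightarrow> tword) \<Rightarrow> bool" where
  "is_linear_endo c g P \<longleftrightarrow>
     (\<forall>x\<in>freeNil c g. P x \<in> freeNil c g) \<and>
     (\<forall>x\<in>freeNil c g. \<forall>y\<in>freeNil c g. P (x + y) = P x + P y) \<and>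
     (\<forall>a. \<forall>x\<in>freeNil c g. P (\<lambda>w. a * x w) = (\<lambda>w. a * P x w))"

definition is_prederivation :: "nat \<Rightarrow> nat \<Rightarrow> (tword \<Rightarrow> tword) \<Rightarrow> bool" where
  "is_prederivation c g P \<longleftrightarrow> is_linear_endo c g P \<and>
     (\<forall>x\<in>freeNil c g. \<forall>y\<in>freeNil c g. \<forall>z\<in>freeNil c g.
        P (lie_br c x (lie_br c y z)) =
          lie_br c (P x) (lie_br c y z) + lie_br c x (lie_br c (P y) z)
          + lie_br c x (lie_br c y (P z)))"

definition is_periodic :: "nat \<Rightarrow> nat \<Rightarrow> (tword \<Rightarrow> tword) \<Rightarrow> bool" where
  "is_periodic c g P \<longleftrightarrow> (\<exists>m::nat. m \<ge> 1 \<and> (\<forall>x\<in>freeNil c g. (P ^^ m) x = x))"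

end

theory Submission imports Defs begin

definition sm :: "complex \<Rightarrow> tword \<Rightarrow> tword" where "sm a x = (\<lambda>w. a * x w)"

lemma tmul_sm_l: "tmul c (sm a f) h = sm a (tmul c f h)"
  unfolding tmul_def sm_def by (auto simp: sum_distrib_left mult.assoc)
lemma tmul_sm_r: "tmul c f (sm a h) = sm a (tmul c f h)"
  unfolding tmul_def sm_def by (auto simp: sum_distrib_left mult.assoc mult.left_commute)
lemma tmul_add_l: "tmul c (f + g) h = tmul c f h + tmul c g h"
  unfolding tmul_def by (auto simp: sum.distrib algebra_simps)
lemma tmul_add_r: "tmul c f (g + h) = tmul c f g + tmul c f h"
  unfolding tmul_def by (auto simp: sum.distrib algebra_simps)
lemma sm_add: "sm a x + sm b x = sm (a+b) x" "sm a x + sm a y = sm a (x + y)"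
  unfolding sm_def by (auto simp: algebra_simps)
lemma br_sm_l: "lie_br c (sm a f) h = sm a (lie_br c f h)"
  unfolding lie_br_def by (simp add: tmul_sm_l tmul_sm_r) (simp add: sm_def fun_eq_iff algebra_simps)
lemma br_sm_r: "lie_br c f (sm a h) = sm a (lie_br c f h)"
  unfolding lie_br_def by (simp add: tmul_sm_l tmul_sm_r) (simp add: sm_def fun_eq_iff algebra_simps)

lemma freeNil_sm: "x \<in> freeNil c g \<Longrightarrow> sm a x \<in> freeNil c g"
  unfolding sm_def by (rule freeNil.smult)

lemma freeNil_nil: "x \<in> freeNil c g \<Longrightarrow> x [] = 0"
  by (induction rule: freeNil.induct) (auto simp: lie_gen_def lie_br_def tmul_def)

lemma eigen3:
  assumes pd: "is_prederivation c g P" and x: "x \<in> freeNil c g" and y: "y \<in> freeNil c g"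
    and z: "z \<in> freeNil c g"
    and Px: "P x = sm a x" and Py: "P y = sm b y" and Pz: "P z = sm d z"
  shows "P (lie_br c x (lie_br c y z)) = sm (a+b+d) (lie_br c x (lie_br c y z))"
  using pd x y z unfolding is_prederivation_def
  by (simp add: Px Py Pz br_sm_l br_sm_r sm_add)

lemma P_sm: "is_prederivation c g P \<Longrightarrow> x \<in> freeNil c g \<Longrightarrow> P (sm a x) = sm a (P x)"
  unfolding is_prederivation_def is_linear_endo_def sm_def by blast
lemma P_in: "is_prederivation c g P \<Longrightarrow> x \<in> freeNil c g \<Longrightarrow> P x \<in> freeNil c g"
  unfolding is_prederivation_def is_linear_endo_def by blast
lemma P_add: "is_prederivation c g P \<Longrightarrow> x \<in> freeNil c g \<Longrightarrow> y \<in> freeNil c g \<Longrightarrow> P (x+y) = P x + P y"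
  unfolding is_prederivation_def is_linear_endo_def by blast

lemma Ppow_in: "is_prederivation c g P \<Longrightarrow> x \<in> freeNil c g \<Longrightarrow> (P^^k) x \<in> freeNil c g"
  by (induction k) (auto intro: P_in)

lemma eig_pow: assumes "is_prederivation c g P" "x \<in> freeNil c g" "P x = sm a x"
  shows "(P^^k) x = sm (a^k) x"
proof (induction k)
  case 0 then show ?case by (simp add: sm_def)
next
  case (Suc k)
  have "(P^^Suc k) x = P (sm (a^k) x)" using Suc by simp
  also have "\<dots> = sm (a^k) (P x)" using P_sm[OF assms(1,2)] by simp
  finally show ?case using assms(3) by (simp add: sm_def fun_eq_iff mult.assoc mult.commute)
qed

lemma eig_norm: assumes "is_prederivation c g P" "is_periodic c g P" "x \<in> freeNil c g" "P x = sm a x" "x \<noteq> 0"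
  shows "norm a = 1"
proof -
  obtain m where m: "m \<ge> 1" "(P^^m) x = x" using assms(2,3) unfolding is_periodic_def by blast
  then have "sm (a^m) x = x" using eig_pow[OF assms(1,3,4)] by simp
  moreover obtain w where "x w \<noteq> 0" using assms(5) by (metis ext zero_fun_def)
  ultimately have "a^m = 1" unfolding sm_def by (metis mult_cancel_right2 fun_eq_iff)
  then have "norm a ^ m = 1" by (metis norm_one norm_power)
  then show ?thesis using m(1) power_eq_imp_eq_base[of "norm a" m 1] by simp
qed

fun Ev :: "(nat \<Rightarrow> complex) list \<Rightarrow> tword \<Rightarrow> complex" where
  "Ev [] T = T []"
| "Ev (f#fs) T = (\<Sum>x\<in>{0,1}. f x * Ev fs (\<lambda>w. T (x#w)))"

definition ordg :: "nat \<Rightarrow> tword \<Rightarrow> bool" where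
  "ordg k f \<longleftrightarrow> (\<forall>w. length w < k \<longrightarrow> f w = 0)"

lemma Ev_cong: "(\<And>w. length w = length fs \<Longrightarrow> T w = T' w) \<Longrightarrow> Ev fs T = Ev fs T'"
proof (induction fs arbitrary: T T')
  case Nil then show ?case by simp
next
  case (Cons f fs)
  have "\<And>x. Ev fs (\<lambda>w. T (x#w)) = Ev fs (\<lambda>w. T' (x#w))"
    by (rule Cons.IH) (simp add: Cons.prems)
  then show ?case by simp
qed

lemma Ev_scale: "Ev fs (\<lambda>w. a * T w) = a * Ev fs T"
  by (induction fs arbitrary: T) (simp_all add: algebra_simps)

lemma Ev_diff: "Ev fs (T - T') = Ev fs T - Ev fs T'"
proof (induction fs arbitrary: T T')
  case Nil then show ?case by simp
next
  case (Cons f fs)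
  have h: "\<And>x. Ev fs (\<lambda>w. T (x#w) - T' (x#w)) = Ev fs (\<lambda>w. T (x#w)) - Ev fs (\<lambda>w. T' (x#w))"
    using Cons.IH[of "\<lambda>w. T (x#w)" "\<lambda>w. T' (x#w)" for x] by (simp add: fun_diff_def)
  show ?case unfolding Ev.simps fun_diff_def by (simp only: h) (simp add: algebra_simps)
qed

lemma Ev_split: "p \<le> length fs \<Longrightarrow>
  Ev fs (\<lambda>w. f (take p w) * h (drop p w)) = Ev (take p fs) f * Ev (drop p fs) h"
proof (induction fs arbitrary: p f)
  case Nil then show ?case by simp
next
  case (Cons \<phi> fs)
  show ?case
  proof (cases p)
    case 0 then show ?thesis using Ev_scale[of "Cons \<phi> fs" "f []" h] by simp
  next
    case (Suc p')
    then have "p' \<le> length fs" using Cons.prems by simp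
    then have "\<And>x. Ev fs (\<lambda>w. f (x # take p' w) * h (drop p' w)) =
        Ev (take p' fs) (\<lambda>w. f (x#w)) * Ev (drop p' fs) h"
      using Cons.IH[of p' "\<lambda>w. f (x#w)" for x] by simp
    then show ?thesis using Suc by (simp add: algebra_simps)
  qed
qed

lemma tmul_hom:
  assumes "ordg p f" "ordg q h" "length w = p + q" "p + q \<le> c"
  shows "tmul c f h w = f (take p w) * h (drop p w)"
proof -
  have "tmul c f h w = (\<Sum>i\<le>length w. if i = p then f (take p w) * h (drop p w) else 0)"
  proof -
    have lc: "length w \<le> c" using assms by simp
    show ?thesis unfolding tmul_def if_P[OF lc]
  proof (intro sum.cong refl)
    fix i assume iw: "i \<in> {..length w}"
    show "f (take i w) * h (drop i w) = (if i = p then f (take p w) * h (drop p w) else 0)"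
    proof (cases "i < p")
      case True then show ?thesis using assms(1,3) by (simp add: ordg_def)
    next
      case False
      show ?thesis
      proof (cases "i = p")
        case False
        then have "length (drop i w) < q" using \<open>\<not> i < p\<close> assms(3) iw by auto
        then show ?thesis using assms(2) False by (simp add: ordg_def)
      qed simp
    qed
  qed
  qed
  then show ?thesis using assms(3) by simp
qed

lemma tmul_ord: "ordg p f \<Longrightarrow> ordg q h \<Longrightarrow> ordg (p+q) (tmul c f h)"
  unfolding ordg_def tmul_def
proof (intro allI impI, simp, intro impI sum.neutral ballI)
  fix w :: "nat list" and i
  assume a: "\<forall>w. length w < p \<longrightarrow> f w = 0" "\<forall>w. length w < q \<longrightarrow> h w = 0"
    "length w < p + q" "i \<in> {..length w}"
  show "f (take i w) * h (drop i w) = 0"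
  proof (cases "i < p")
    case True then show ?thesis using a by simp
  next
    case False then show ?thesis using a by simp
  qed
qed

lemma br_ord: "ordg p f \<Longrightarrow> ordg q h \<Longrightarrow> ordg (p+q) (lie_br c f h)"
  unfolding lie_br_def using tmul_ord[of p f q h c] tmul_ord[of q h p f c]
  by (simp add: ordg_def add.commute)

lemma Ev_br:
  assumes "ordg p f" "ordg q h" "length fs = p + q" "p + q \<le> c"
  shows "Ev fs (lie_br c f h) = Ev (take p fs) f * Ev (drop p fs) h - Ev (take q fs) h * Ev (drop q fs) f"
proof -
  have "Ev fs (tmul c f h) = Ev fs (\<lambda>w. f (take p w) * h (drop p w))"
    by (rule Ev_cong) (use assms tmul_hom in auto)
  moreover have "Ev fs (tmul c h f) = Ev fs (\<lambda>w. h (take q w) * f (drop q w))"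
    by (rule Ev_cong) (use assms tmul_hom[of q h p f] in auto)
  ultimately show ?thesis unfolding lie_br_def Ev_diff using assms Ev_split by simp
qed

lemma freeNil_ord: "x \<in> freeNil c g \<Longrightarrow> ordg 1 x"
  using freeNil_nil unfolding ordg_def by auto


lemma freeNil_lc: "finite K \<Longrightarrow> (\<forall>k\<in>K. f k \<in> freeNil c g) \<Longrightarrow> (\<lambda>w. \<Sum>k\<in>K. a k * f k w) \<in> freeNil c g"
proof (induction K rule: finite_induct)
  case empty then show ?case using freeNil.zero by (simp add: zero_fun_def)
next
  case (insert k K)
  have "(\<lambda>w. \<Sum>k\<in>insert k K. a k * f k w) = sm (a k) (f k) + (\<lambda>w. \<Sum>k\<in>K. a k * f k w)"
    using insert by (simp add: sm_def plus_fun_def)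
  then show ?case using insert by (auto intro!: freeNil.add freeNil_sm)
qed

lemma P_zero: "is_prederivation c g P \<Longrightarrow> P 0 = 0"
  using P_add[OF _ freeNil.zero freeNil.zero, of c g P] by simp

lemma P_lc: assumes pd: "is_prederivation c g P" shows "finite K \<Longrightarrow> (\<forall>k\<in>K. f k \<in> freeNil c g) \<Longrightarrow>
   P (\<lambda>w. \<Sum>k\<in>K. a k * f k w) = (\<lambda>w. \<Sum>k\<in>K. a k * P (f k) w)"
proof (induction K rule: finite_induct)
  case empty then show ?case using P_zero[OF pd] by (simp add: zero_fun_def)
next
  case (insert k K)
  have e: "(\<lambda>w. \<Sum>k\<in>insert k K. a k * f k w) = sm (a k) (f k) + (\<lambda>w. \<Sum>k\<in>K. a k * f k w)"
    using insert by (simp add: sm_def plus_fun_def)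
  have "P (sm (a k) (f k) + (\<lambda>w. \<Sum>k\<in>K. a k * f k w)) = P (sm (a k) (f k)) + P (\<lambda>w. \<Sum>k\<in>K. a k * f k w)"
    using insert by (intro P_add[OF pd] freeNil_sm freeNil_lc) auto
  also have "\<dots> = sm (a k) (P (f k)) + (\<lambda>w. \<Sum>k\<in>K. a k * P (f k) w)"
    using insert by (simp add: P_sm[OF pd])
  finally show ?case using e insert by (simp add: sm_def plus_fun_def)
qed

definition om :: "nat \<Rightarrow> complex" where "om m = cis (2 * pi / real m)"

lemma om_pow: "m \<ge> 1 \<Longrightarrow> om m ^ m = 1"
  unfolding om_def DeMoivre by simp

lemma om_pow_ne: assumes "0 < k" "k < m" shows "om m ^ k \<noteq> 1"
proof
  assume "om m ^ k = 1"
  then have "cos (real k * (2 * pi / real m)) = 1" unfolding om_def DeMoivre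
    by (metis complex.sel(1) cis.sel(1) one_complex.sel(1))
  then obtain n :: int where n: "real k * (2 * pi / real m) = real_of_int n * 2 * pi" using cos_one_2pi_int[THEN iffD1] by blast
  then have "real k = n * real m" using assms by (simp add: field_simps)
  then have "int k = n * int m" by (metis of_int_eq_iff of_int_mult of_int_of_nat_eq)
  show False
  proof (cases "n \<le> 0")
    case True
    then have "n * int m \<le> 0" by (simp add: mult_nonpos_nonneg)
    then show False using \<open>int k = n * int m\<close> assms by linarith
  next
    case False
    then have "1 * int m \<le> n * int m" by (intro mult_right_mono) auto
    then show False using \<open>int k = n * int m\<close> assms by linarith
  qed
qed

lemma om_nz: "m \<ge> 1 \<Longrightarrow> om m \<noteq> 0"
  unfolding om_def by (metis cis_neq_zero)

definition Eproj :: "nat \<Rightarrow> (tword \<Rightarrow> tword) \<Rightarrow> nat \<Rightarrow> tword \<Rightarrow> tword" where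
  "Eproj m P r x = (\<lambda>w. \<Sum>k<m. (inverse (om m ^ r) ^ k / of_nat m) * (P^^k) x w)"

lemma Eproj_in: "is_prederivation c g P \<Longrightarrow> x \<in> freeNil c g \<Longrightarrow> Eproj m P r x \<in> freeNil c g"
  unfolding Eproj_def by (intro freeNil_lc) (auto intro: Ppow_in)

lemma Eproj_eig:
  assumes pd: "is_prederivation c g P" and m: "m \<ge> 1" and per: "(P^^m) x = x" and x: "x \<in> freeNil c g"
  shows "P (Eproj m P r x) = sm (om m ^ r) (Eproj m P r x)"
proof -
  define z where "z = om m ^ r"
  have zm: "z ^ m = 1" unfolding z_def using om_pow[OF m] by (metis power_mult power_mult_distrib power_one mult.commute)
  have z0: "z \<noteq> 0" unfolding z_def using om_nz[OF m] by simp
  define a where "a k = inverse z ^ k / of_nat m" for k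
  obtain n where n: "m = Suc n" using m by (cases m) auto
  have Pk: "\<And>k. P ((P^^k) x) = (P^^Suc k) x" by simp
  have "P (Eproj m P r x) = (\<lambda>w. \<Sum>k<m. a k * P ((P^^k) x) w)"
    unfolding Eproj_def a_def z_def by (rule P_lc[OF pd]) (auto intro: Ppow_in[OF pd x])
  also have "\<dots> = (\<lambda>w. \<Sum>k<m. a k * (P^^Suc k) x w)" by (simp only: Pk)
  also have "\<dots> = (\<lambda>w. z * (\<Sum>k<m. a k * (P^^k) x w))"
  proof
    fix w
    have s1: "(\<Sum>k<m. a k * (P^^Suc k) x w) = (\<Sum>k<n. a k * (P^^Suc k) x w) + a n * x w"
      using per n by simp
    have s2: "(\<Sum>k<m. a k * (P^^k) x w) = (\<Sum>k<n. a (Suc k) * (P^^Suc k) x w) + a 0 * x w"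
      unfolding n sum.lessThan_Suc_shift by simp
    have ak: "z * a (Suc k) = a k" for k unfolding a_def using z0 by (simp add: field_simps)
    have zn: "z * z ^ n = 1" using zm n by simp
    then have "inverse z ^ n = z" using z0
      by (metis inverse_unique mult.commute power_inverse inverse_inverse_eq)
    then have a0: "z * a 0 = a n" unfolding a_def by simp
    show "(\<Sum>k<m. a k * (P^^Suc k) x w) = z * (\<Sum>k<m. a k * (P^^k) x w)"
      unfolding s1 s2 distrib_left sum_distrib_left
      by (simp add: mult.assoc[symmetric] ak a0)
  qed
  finally show ?thesis unfolding Eproj_def sm_def z_def a_def .
qed

lemma Eproj_sum:
  assumes m: "m \<ge> 1"
  shows "(\<Sum>r<m. Eproj m P r x w) = x w"
proof -
  have geo: "(\<Sum>r<m. inverse (om m ^ k) ^ r) = (if k = 0 then of_nat m else 0)" if k: "k < m" for k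
  proof (cases "k = 0")
    case False
    have y1: "inverse (om m ^ k) \<noteq> 1" using om_pow_ne[of k m] False k by auto
    have "inverse (om m ^ k) ^ m = 1"
      using om_pow[OF m] by (metis power_inverse power_mult mult.commute power_one inverse_1)
    then show ?thesis using y1 False by (simp add: sum_gp_strict)
  qed simp
  have "(\<Sum>r<m. Eproj m P r x w) = (\<Sum>r<m. \<Sum>k<m. inverse (om m ^ k) ^ r / of_nat m * (P^^k) x w)"
    unfolding Eproj_def by (intro sum.cong refl) (metis power_inverse power_mult mult.commute)
  also have "\<dots> = (\<Sum>k<m. (\<Sum>r<m. inverse (om m ^ k) ^ r) / of_nat m * (P^^k) x w)"
    by (subst sum.swap) (simp add: sum_distrib_right sum_divide_distrib)
  also have "\<dots> = (\<Sum>k<m. if k = 0 then x w else 0)"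
    using m by (intro sum.cong refl) (simp add: geo)
  also have "\<dots> = x w" using m by simp
  finally show ?thesis .
qed

lemma norm1_sq: "norm (z::complex) = 1 \<Longrightarrow> (Re z)^2 + (Im z)^2 = 1"
  unfolding cmod_def by simp

lemma final_arith:
  fixes a b :: complex
  assumes "norm a = 1" "norm b = 1" "norm (a+a+b) = 1" "norm (a+a+(a+a+b)) = 1"
  shows False
proof -
  have 1: "(Re a)^2 + (Im a)^2 = 1" using norm1_sq[OF assms(1)] .
  have 2: "(Re b)^2 + (Im b)^2 = 1" using norm1_sq[OF assms(2)] .
  have 3: "(2*Re a + Re b)^2 + (2*Im a + Im b)^2 = 1" using norm1_sq[OF assms(3)] by simp
  have 4: "(4*Re a + Re b)^2 + (4*Im a + Im b)^2 = 1" using norm1_sq[OF assms(4)] by simp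
  define s where "s = Re a * Re b + Im a * Im b"
  have "4 * ((Re a)^2 + (Im a)^2) + 4 * s + ((Re b)^2 + (Im b)^2) = 1"
    using 3 unfolding s_def by (simp add: power2_eq_square algebra_simps)
  moreover have "16 * ((Re a)^2 + (Im a)^2) + 8 * s + ((Re b)^2 + (Im b)^2) = 1"
    using 4 unfolding s_def by (simp add: power2_eq_square algebra_simps)
  ultimately have "4 * s = -4" "8 * s = -16" using 1 2 by simp_all
  then show False by simp
qed

lemma Ev_comp:
  assumes u: "ordg 1 u" and v: "ordg 1 v" and c: "c \<ge> 5"
    and e1: "Ev [\<phi>] u = 1" and e2: "Ev [\<psi>] u = 0" and e3: "Ev [\<phi>] v = 0" and e4: "Ev [\<psi>] v = 1"
  shows "Ev [\<phi>,\<phi>,\<psi>] (lie_br c u (lie_br c u v)) = 1"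
    and "Ev [\<phi>,\<phi>,\<phi>,\<phi>,\<psi>] (lie_br c u (lie_br c u (lie_br c u (lie_br c u v)))) = 1"
proof -
  have o2: "ordg (1+1) (lie_br c u v)" using br_ord[OF u v] .
  have o3: "ordg (1+(1+1)) (lie_br c u (lie_br c u v))" using br_ord[OF u o2] .
  have o4: "ordg (1+(1+(1+1))) (lie_br c u (lie_br c u (lie_br c u v)))" using br_ord[OF u o3] .
  have a: "Ev [\<phi>,\<psi>] (lie_br c u v) = 1"
    using Ev_br[OF u v, of "[\<phi>,\<psi>]" c] c e1 e2 e3 e4 by simp
  have b: "Ev [\<phi>,\<phi>] (lie_br c u v) = 0"
    using Ev_br[OF u v, of "[\<phi>,\<phi>]" c] c by simp
  show r3: "Ev [\<phi>,\<phi>,\<psi>] (lie_br c u (lie_br c u v)) = 1"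
    using Ev_br[OF u o2, of "[\<phi>,\<phi>,\<psi>]" c] c e1 e2 a b by simp
  have r4: "Ev [\<phi>,\<phi>,\<phi>,\<psi>] (lie_br c u (lie_br c u (lie_br c u v))) = 1"
    using Ev_br[OF u o3, of "[\<phi>,\<phi>,\<phi>,\<psi>]" c] c e1 e2 r3 by simp
  show "Ev [\<phi>,\<phi>,\<phi>,\<phi>,\<psi>] (lie_br c u (lie_br c u (lie_br c u (lie_br c u v)))) = 1"
    using Ev_br[OF u o4, of "[\<phi>,\<phi>,\<phi>,\<phi>,\<psi>]" c] c e1 e2 r4 by simp
qed

lemma norm_om: "norm (om m ^ r) = 1"
  unfolding om_def by (simp add: norm_power)

lemma Ev1: "Ev [f] u = f 0 * u [0] + f 1 * u [1]"
  by simp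

lemma alg1: fixes D a0 a1 b0 b1 :: complex assumes "D \<noteq> 0" "D = a0*b1 - a1*b0"
  shows "b1 / D * a0 + - b0 / D * a1 = 1" "- a1 / D * b0 + a0 / D * b1 = 1"
proof -
  have q: "(a0*b1 - a1*b0)/D = 1" using assms(1) by (simp add: assms(2)[symmetric])
  show "b1 / D * a0 + - b0 / D * a1 = 1" using q by (simp add: diff_divide_distrib algebra_simps)
  show "- a1 / D * b0 + a0 / D * b1 = 1" using q by (simp add: diff_divide_distrib algebra_simps)
qed

theorem corollary5p13:
  fixes c g :: nat
  assumes "c \<ge> 5" and "g \<ge> 2"
  shows "\<not> (\<exists>P. is_prederivation c g P \<and> is_periodic c g P)"
proof
  assume "\<exists>P. is_prederivation c g P \<and> is_periodic c g P"
  then obtain P where pd: "is_prederivation c g P" and per: "is_periodic c g P" by blast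
  then obtain m where m: "m \<ge> 1" and pm: "\<forall>x\<in>freeNil c g. (P^^m) x = x"
    unfolding is_periodic_def by blast
  have e0: "lie_gen 0 \<in> freeNil c g" and e1: "lie_gen 1 \<in> freeNil c g"
    using assms(2) by (auto intro: freeNil.gen)
  define U where "U r = Eproj m P r (lie_gen 0)" for r
  define V where "V r = Eproj m P r (lie_gen 1)" for r
  have sU0: "(\<Sum>r<m. U r [0]) = 1" and sU1: "(\<Sum>r<m. U r [1]) = 0"
    and sV0: "(\<Sum>r<m. V r [0]) = 0" and sV1: "(\<Sum>r<m. V r [1]) = 1"
    unfolding U_def V_def Eproj_sum[OF m] by (simp_all add: lie_gen_def)
  have "(1::complex) = (\<Sum>r<m. U r [0]) * (\<Sum>s<m. V s [1]) - (\<Sum>r<m. U r [1]) * (\<Sum>s<m. V s [0])"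
    using sU0 sU1 sV0 sV1 by simp
  also have "\<dots> = (\<Sum>r<m. \<Sum>s<m. U r [0] * V s [1] - U r [1] * V s [0])"
    by (simp add: sum_product sum_subtractf)
  finally obtain r s where D: "U r [0] * V s [1] - U r [1] * V s [0] \<noteq> 0"
    by (metis (no_types, lifting) sum.neutral zero_neq_one)
  define u where "u = U r"
  define v where "v = V s"
  define D where "D = u [0] * v [1] - u [1] * v [0]"
  have D0: "D \<noteq> 0" using D unfolding D_def u_def v_def .
  have uin: "u \<in> freeNil c g" unfolding u_def U_def by (rule Eproj_in[OF pd e0])
  have vin: "v \<in> freeNil c g" unfolding v_def V_def by (rule Eproj_in[OF pd e1])
  define \<alpha> where "\<alpha> = om m ^ r"
  define \<beta> where "\<beta> = om m ^ s"
  have Pu: "P u = sm \<alpha> u" unfolding u_def U_def \<alpha>_def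
    by (rule Eproj_eig[OF pd m]) (use pm e0 in auto)
  have Pv: "P v = sm \<beta> v" unfolding v_def V_def \<beta>_def
    by (rule Eproj_eig[OF pd m]) (use pm e1 in auto)
  define w3 where "w3 = lie_br c u (lie_br c u v)"
  define w5 where "w5 = lie_br c u (lie_br c u w3)"
  have w3in: "w3 \<in> freeNil c g" unfolding w3_def using uin vin by (intro freeNil.br)
  have w5in: "w5 \<in> freeNil c g" unfolding w5_def using uin w3in by (intro freeNil.br)
  have Pw3: "P w3 = sm (\<alpha>+\<alpha>+\<beta>) w3" unfolding w3_def by (rule eigen3[OF pd uin uin vin Pu Pu Pv])
  have Pw5: "P w5 = sm (\<alpha>+\<alpha>+(\<alpha>+\<alpha>+\<beta>)) w5" unfolding w5_def by (rule eigen3[OF pd uin uin w3in Pu Pu Pw3])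
  define \<phi> where "\<phi> x = (if x = 0 then v [1] / D else - v [0] / D)" for x :: nat
  define \<psi> where "\<psi> x = (if x = 0 then - u [1] / D else u [0] / D)" for x :: nat
  have E1: "Ev [\<phi>] u = 1" unfolding Ev1 \<phi>_def using alg1(1)[OF D0 D_def] by simp
  have E2: "Ev [\<psi>] u = 0" unfolding Ev1 \<psi>_def using D0 by (simp add: field_simps)
  have E3: "Ev [\<phi>] v = 0" unfolding Ev1 \<phi>_def using D0 by (simp add: field_simps)
  have E4: "Ev [\<psi>] v = 1" unfolding Ev1 \<psi>_def using alg1(2)[OF D0 D_def] by simp
  note EC = Ev_comp[OF freeNil_ord[OF uin] freeNil_ord[OF vin] assms(1) E1 E2 E3 E4]
  have w3nz: "w3 \<noteq> 0" using EC(1) unfolding w3_def by (auto simp: zero_fun_def)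
  have w5nz: "w5 \<noteq> 0" using EC(2) unfolding w5_def w3_def by (auto simp: zero_fun_def)
  show False
  proof (rule final_arith)
    show "norm \<alpha> = 1" "norm \<beta> = 1" unfolding \<alpha>_def \<beta>_def by (rule norm_om)+
    show "norm (\<alpha>+\<alpha>+\<beta>) = 1" by (rule eig_norm[OF pd per w3in Pw3 w3nz])
    show "norm (\<alpha>+\<alpha>+(\<alpha>+\<alpha>+\<beta>)) = 1" by (rule eig_norm[OF pd per w5in Pw5 w5nz])
  qed
qed
end
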